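(* Let $S$ be a signal of a mixed signaling scheme such that the set $\{w_1(j): j\in S\}$ consists of a single bidder. Then $S$ is singleton-splittable, i.e. $\sum_{j\in S}\varphi_{j,S}\,\mathrm{rev}(j)\ge\mathrm{rev}(S)$.
   Context: Setting: $n\ge 2$ bidders, $m$ item types with probabilities $p_j$, nonnegative valuations $v_{i,j}$; $\psi_{i,j}=p_jv_{i,j}$. A mixed signaling scheme is a finite signal set $\mathcal{S}$ and $\varphi:[m]\times\mathcal{S}\to[0,1]$ with $\sum_S\varphi(j,S)=1$ for each $j$; $\varphi_{j,S}=\varphi(j,S)$; $j\in S$ means $\varphi_{j,S}>0$. Ties are broken by a fixed priority order on bidders. $w_1(S)$ is the bidder maximizing $\sum_j\psi_{i,j}\varphi_{j,S}$ and $w_2(S)$ the maximizer among $i\ne w_1(S)$; $\mathrm{rev}(S)=\sum_j\varphi_{j,S}\psi_{w_2(S),j}$. For a type $j$, $w_1(j)$ is the bidder maximizing $\psi_{i,j}$ and $\mathrm{rev}(j)=\mathrm{max2}_i\psi_{i,j}$ (second-largest entry with multiplicity). *)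

theory Defs
  imports Complex_Main "HOL-Library.Multiset"
begin

text \<open>Bidders are 0..<n, item types are 0..<m. Ties are broken by a fixed
priority order given by an injective rank function pr on bidders: a bidder
with smaller rank wins ties.\<close>

definition best :: "(nat \<Rightarrow> nat) \<Rightarrow> (nat \<Rightarrow> real) \<Rightarrow> nat set \<Rightarrow> nat" where
  "best pr f A = (THE i. i \<in> A \<and> (\<forall>k\<in>A. f k < f i \<or> (f k = f i \<and> pr i \<le> pr k)))"

definition psi :: "(nat \<Rightarrow> real) \<Rightarrow> (nat \<Rightarrow> nat \<Rightarrow> real) \<Rightarrow> nat \<Rightarrow> nat \<Rightarrow> real" where
  "psi p v i j = p j * v i j"

definition sigval :: "nat \<Rightarrow> (nat \<Rightarrow> real) \<Rightarrow> (nat \<Rightarrow> nat \<Rightarrow> real) \<Rightarrow> (nat \<Rightarrow> 's \<Rightarrow> real) \<Rightarrow> 's \<Rightarrow> nat \<Rightarrow> real" where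
  "sigval m p v \<phi> S i = (\<Sum>j<m. psi p v i j * \<phi> j S)"

definition w1_sig where
  "w1_sig n m pr p v \<phi> S = best pr (sigval m p v \<phi> S) {..<n}"

definition w2_sig where
  "w2_sig n m pr p v \<phi> S = best pr (sigval m p v \<phi> S) ({..<n} - {w1_sig n m pr p v \<phi> S})"

definition rev_sig where
  "rev_sig n m pr p v \<phi> S = (\<Sum>j<m. \<phi> j S * psi p v (w2_sig n m pr p v \<phi> S) j)"

definition w1_type where
  "w1_type n pr p v j = best pr (\<lambda>i. psi p v i j) {..<n}"

text \<open>Second-largest entry (with multiplicity) of the column (\<psi>_{i,j})_i.\<close>
definition rev_type :: "nat \<Rightarrow> (nat \<Rightarrow> real) \<Rightarrow> (nat \<Rightarrow> nat \<Rightarrow> real) \<Rightarrow> nat \<Rightarrow> real" where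
  "rev_type n p v j =
     (let xs = sorted_list_of_multiset (image_mset (\<lambda>i. psi p v i j) (mset_set {..<n}))
      in xs ! (n - 2))"

definition types_in where
  "types_in m \<phi> S = {j. j < m \<and> \<phi> j S > 0}"

end

theory Submission
  imports Defs
begin

lemma best_prop:
  assumes fin: "finite A" and ne: "A \<noteq> {}" and inj: "inj_on pr A"
  shows "best pr f A \<in> A \<and> (\<forall>k\<in>A. f k \<le> f (best pr f A))"
proof -
  define M where "M = Max (f ` A)"
  define B where "B = {i\<in>A. f i = M}"
  have MA: "M \<in> f ` A" unfolding M_def using fin ne by simp
  have Mge: "\<forall>k\<in>A. f k \<le> M" unfolding M_def using fin by simp
  have Bfin: "finite B" "B \<noteq> {}" using fin MA unfolding B_def by auto
  define q where "q = Min (pr ` B)"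
  have "q \<in> pr ` B" unfolding q_def using Bfin by simp
  then obtain i0 where i0: "i0 \<in> B" "pr i0 = q" by auto
  have qle: "\<forall>k\<in>B. q \<le> pr k" unfolding q_def using Bfin by simp
  let ?P = "\<lambda>i. i \<in> A \<and> (\<forall>k\<in>A. f k < f i \<or> (f k = f i \<and> pr i \<le> pr k))"
  have P0: "?P i0"
  proof -
    have "i0 \<in> A" "f i0 = M" using i0 unfolding B_def by auto
    moreover have "\<forall>k\<in>A. f k < f i0 \<or> (f k = f i0 \<and> pr i0 \<le> pr k)"
    proof
      fix k assume k: "k \<in> A"
      show "f k < f i0 \<or> (f k = f i0 \<and> pr i0 \<le> pr k)"
      proof (cases "f k = M")
        case True then have "k \<in> B" using k unfolding B_def by auto
        then show ?thesis using qle i0 True \<open>f i0 = M\<close> by auto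
      next
        case False then show ?thesis using Mge k \<open>f i0 = M\<close> by force
      qed
    qed
    ultimately show ?thesis by auto
  qed
  have uniq: "\<And>i. ?P i \<Longrightarrow> i = i0"
  proof -
    fix i assume Pi: "?P i"
    have c1: "f i0 < f i \<or> (f i0 = f i \<and> pr i \<le> pr i0)" using Pi P0 by auto
    have c2: "f i < f i0 \<or> (f i = f i0 \<and> pr i0 \<le> pr i)" using Pi P0 by auto
    from c1 c2 have "pr i = pr i0" by auto
    then show "i = i0" using inj Pi P0 by (meson inj_onD)
  qed
  have "best pr f A = i0" unfolding best_def using P0 uniq by (rule the_equality)
  then show ?thesis using P0 by force
qed

lemma sorted_second:
  fixes xs :: "real list"
  assumes s: "sorted xs" and len: "length xs = n" and n2: "n \<ge> 2"
    and cnt: "2 \<le> length (filter (\<lambda>x. c \<le> x) xs)"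
  shows "c \<le> xs ! (n - 2)"
proof (rule ccontr)
  assume "\<not> c \<le> xs ! (n - 2)"
  then have lt: "xs ! (n-2) < c" by simp
  have "\<forall>x\<in>set (take (n-1) xs). \<not> c \<le> x"
  proof
    fix x assume "x \<in> set (take (n-1) xs)"
    then obtain k where k: "k < length (take (n-1) xs)" "x = take (n-1) xs ! k"
      by (auto simp: in_set_conv_nth)
    then have kk: "k \<le> n - 2" "x = xs ! k" using len n2 by auto
    have "xs ! k \<le> xs ! (n-2)" using s kk len n2 by (intro sorted_nth_mono) auto
    then show "\<not> c \<le> x" using kk lt by auto
  qed
  then have "filter (\<lambda>x. c \<le> x) (take (n-1) xs) = []" by (simp add: filter_empty_conv)
  then have "filter (\<lambda>x. c \<le> x) xs = filter (\<lambda>x. c \<le> x) (drop (n-1) xs)"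
    by (metis append_take_drop_id filter_append self_append_conv2)
  then have "length (filter (\<lambda>x. c \<le> x) xs) \<le> 1"
    by (metis length_filter_le length_drop len n2 diff_diff_cancel le_trans
        Suc_1 Suc_le_lessD less_imp_le_nat one_le_numeral)
  then show False using cnt by simp
qed

lemma rev_type_ge:
  assumes n2: "n \<ge> 2" and a: "a < n" and b: "b < n" and ab: "b \<noteq> a"
    and amax: "psi p v b j \<le> psi p v a j"
  shows "psi p v b j \<le> rev_type n p v j"
proof -
  define f where "f = (\<lambda>i. psi p v i j)"
  define Ms where "Ms = image_mset f (mset_set {..<n})"
  define xs where "xs = sorted_list_of_multiset Ms"
  have xsd: "rev_type n p v j = xs ! (n-2)" unfolding rev_type_def xs_def Ms_def f_def by simp
  have mx: "mset xs = Ms" unfolding xs_def by simp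
  have len: "length xs = n" by (metis mx size_mset Ms_def size_image_mset size_mset_set card_lessThan)
  have "filter_mset (\<lambda>x. f b \<le> x) Ms = image_mset f (mset_set {i\<in>{..<n}. f b \<le> f i})"
    unfolding Ms_def by (simp add: filter_mset_image_mset filter_mset_mset_set)
  then have "size (filter_mset (\<lambda>x. f b \<le> x) Ms) = card {i\<in>{..<n}. f b \<le> f i}" by simp
  moreover have "{a, b} \<subseteq> {i\<in>{..<n}. f b \<le> f i}" using a b amax unfolding f_def by auto
  then have "card {a,b} \<le> card {i\<in>{..<n}. f b \<le> f i}" by (intro card_mono) auto
  ultimately have "2 \<le> length (filter (\<lambda>x. f b \<le> x) xs)"
    using ab by (metis mx mset_filter size_mset card_2_iff)
  then have "f b \<le> xs ! (n-2)" using len n2 by (intro sorted_second) (auto simp: xs_def)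
  then show ?thesis using xsd f_def by simp
qed

theorem corollary1:
  fixes n m :: nat and pr :: "nat \<Rightarrow> nat" and p :: "nat \<Rightarrow> real"
    and v :: "nat \<Rightarrow> nat \<Rightarrow> real" and Sig :: "'s set" and \<phi> :: "nat \<Rightarrow> 's \<Rightarrow> real"
    and S :: 's and a :: nat
  assumes "n \<ge> 2"
    and "inj_on pr {..<n}"
    and "\<forall>j<m. p j \<ge> 0" and "(\<Sum>j<m. p j) = 1"
    and "\<forall>i<n. \<forall>j<m. v i j \<ge> 0"
    and "finite Sig"
    and "\<forall>j<m. \<forall>s\<in>Sig. 0 \<le> \<phi> j s \<and> \<phi> j s \<le> 1"
    and "\<forall>j<m. (\<Sum>s\<in>Sig. \<phi> j s) = 1"
    and "S \<in> Sig"
    and "w1_type n pr p v ` types_in m \<phi> S = {a}"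
  shows "(\<Sum>j\<in>types_in m \<phi> S. \<phi> j S * rev_type n p v j) \<ge> rev_sig n m pr p v \<phi> S"
proof -
  note n2 = assms(1) and inj = assms(2) and img = assms(10)
  define T where "T = types_in m \<phi> S"
  define sv where "sv = sigval m p v \<phi> S"
  define w1 where "w1 = w1_sig n m pr p v \<phi> S"
  define w2 where "w2 = w2_sig n m pr p v \<phi> S"
  have nne: "{..<n} \<noteq> {}" proof - have "(0::nat) \<in> {..<n}" using n2 by simp then show ?thesis by blast qed
  have B1: "w1 \<in> {..<n} \<and> (\<forall>k\<in>{..<n}. sv k \<le> sv w1)"
    unfolding w1_def w1_sig_def sv_def using nne inj by (intro best_prop) auto
  have ne2: "{..<n} - {w1} \<noteq> {}"
  proof -
    have "(if w1 = 0 then 1 else 0) \<in> {..<n} - {w1}" using n2 by auto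
    then show ?thesis by blast
  qed
  have B2: "w2 \<in> {..<n} - {w1} \<and> (\<forall>k\<in>{..<n} - {w1}. sv k \<le> sv w2)"
    unfolding w2_def w2_sig_def sv_def w1_def[symmetric] using ne2 inj
    by (intro best_prop) (auto intro: inj_on_subset)
  have Tne: "T \<noteq> {}" using img unfolding T_def by auto
  then obtain j0 where j0: "j0 \<in> T" by auto
  have "w1_type n pr p v j0 = a" using img j0 unfolding T_def by auto
  moreover have "w1_type n pr p v j0 < n" unfolding w1_type_def using nne inj
    using best_prop[of "{..<n}" pr] by auto
  ultimately have an: "a < n" by simp
  have amax: "\<And>j i. j \<in> T \<Longrightarrow> i < n \<Longrightarrow> psi p v i j \<le> psi p v a j"
  proof -
    fix j i assume j: "j \<in> T" and i: "i < n"
    have "w1_type n pr p v j = a" using img j unfolding T_def by auto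
    then show "psi p v i j \<le> psi p v a j" unfolding w1_type_def using nne inj i
      using best_prop[of "{..<n}" pr "\<lambda>i. psi p v i j"] by auto
  qed
  define b where "b = (if w1 = a then w2 else w1)"
  have bn: "b < n" "b \<noteq> a" using B1 B2 unfolding b_def by auto
  have "sv w2 \<le> sv b" using B1 B2 unfolding b_def by auto
  have phinn: "\<And>j. j < m \<Longrightarrow> 0 \<le> \<phi> j S" using assms(7) assms(9) by auto
  have Tsub: "T \<subseteq> {..<m}" unfolding T_def types_in_def by auto
  have "rev_sig n m pr p v \<phi> S = sv w2"
    unfolding rev_sig_def sv_def sigval_def w2_def by (simp add: mult.commute)
  also have "\<dots> \<le> sv b" by fact
  also have "sv b = (\<Sum>j\<in>T. psi p v b j * \<phi> j S)"
    unfolding sv_def sigval_def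
  proof (rule sum.mono_neutral_right)
    show "finite {..<m}" by simp
    show "T \<subseteq> {..<m}" by fact
    show "\<forall>i\<in>{..<m} - T. psi p v b i * \<phi> i S = 0"
    proof
      fix i assume "i \<in> {..<m} - T"
      then have "\<phi> i S = 0" using phinn[of i] unfolding T_def types_in_def by force
      then show "psi p v b i * \<phi> i S = 0" by simp
    qed
  qed
  also have "\<dots> \<le> (\<Sum>j\<in>T. \<phi> j S * rev_type n p v j)"
  proof (rule sum_mono)
    fix j assume j: "j \<in> T"
    have "psi p v b j \<le> rev_type n p v j"
      using rev_type_ge[OF n2 an bn(1) bn(2) amax[OF j bn(1)]] .
    moreover have "0 \<le> \<phi> j S" using phinn j Tsub by auto
    ultimately show "psi p v b j * \<phi> j S \<le> \<phi> j S * rev_type n p v j"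
      by (simp add: mult.commute mult_left_mono)
  qed
  finally show ?thesis unfolding T_def .
qed

end
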